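(* Let $\delta:G_0\to G_1$ be an open continuous homomorphism of profinite groups with finite kernel. Let $H$ be a closed subgroup of $G_1$ and $\rho:H\to G_0$ a continuous homomorphism with $\delta\circ\rho$ equal to the inclusion $H\hookrightarrow G_1$. Then there exist an open subgroup $U\subset G_1$ containing $H$ and a continuous homomorphism $\rho':U\to G_0$ such that $\rho'|_H=\rho$ and $\delta\circ\rho'$ is the inclusion $U\hookrightarrow G_1$. *)

theory Defs
  imports "HOL-Analysis.Analysis" "HOL-Algebra.Algebra"
begin

definition topological_group :: "'a monoid \<Rightarrow> 'a topology \<Rightarrow> bool" where
  "topological_group G T \<longleftrightarrow>
     group G \<and> topspace T = carrier G \<and>
     continuous_map (prod_topology T T) T (\<lambda>(x, y). x \<otimes>\<^bsub>G\<^esub> y) \<and>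
     continuous_map T T (\<lambda>x. inv\<^bsub>G\<^esub> x)"

definition totally_disconnected_space :: "'a topology \<Rightarrow> bool" where
  "totally_disconnected_space T \<longleftrightarrow>
     (\<forall>S. connectedin T S \<longrightarrow> (\<forall>x\<in>S. \<forall>y\<in>S. x = y))"

definition profinite_group :: "'a monoid \<Rightarrow> 'a topology \<Rightarrow> bool" where
  "profinite_group G T \<longleftrightarrow>
     topological_group G T \<and> compact_space T \<and> Hausdorff_space T \<and>
     totally_disconnected_space T"

end

theory Submission
  imports Defs
begin


lemma clopen_sep:
  assumes "compact_space TX" "Hausdorff_space TX" "totally_disconnected_space TX"
    and "x \<in> topspace TX" "compactin TX F" "x \<notin> F"
  shows "\<exists>C. openin TX C \<and> closedin TX C \<and> x \<in> C \<and> C \<inter> F = {}"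
proof -
  have qc: "quasi_components_of TX = connected_components_of TX"
    using assms(1,2) quasi_eq_connected_components_of by blast
  have Q: "quasi_component_of_set TX x \<in> quasi_components_of TX"
    using assms(4) by (simp add: quasi_components_of_def)
  then have "connectedin TX (quasi_component_of_set TX x)"
    using qc connectedin_connected_components_of by fastforce
  moreover have "x \<in> quasi_component_of_set TX x" using assms(4) by simp
  ultimately have "quasi_component_of_set TX x = {x}"
    using assms(3) unfolding totally_disconnected_space_def by blast
  with Q have "{x} \<in> quasi_components_of TX" by simp
  then have "separated_between TX {x} F"
    using separated_between_quasi_component_compact assms(5,6) by fastforce
  then obtain U V where UV: "openin TX U" "openin TX V" "U \<union> V = topspace TX" "disjnt U V" "{x} \<subseteq> U" "F \<subseteq> V"
    unfolding separated_between_def by blast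
  have "U = topspace TX - V" using UV(3,4) by (auto simp: disjnt_def)
  then have "closedin TX U" using UV(2) by auto
  then show ?thesis using UV by (auto simp: disjnt_def)
qed

lemma tg_mult_cont:
  assumes "topological_group G T" "continuous_map TX T f" "continuous_map TX T g"
  shows "continuous_map TX T (\<lambda>x. f x \<otimes>\<^bsub>G\<^esub> g x)"
proof -
  have "continuous_map TX (prod_topology T T) (\<lambda>x. (f x, g x))"
    using assms by (simp add: continuous_map_pairedI)
  moreover have "continuous_map (prod_topology T T) T (\<lambda>(x, y). x \<otimes>\<^bsub>G\<^esub> y)"
    using assms(1) by (simp add: topological_group_def)
  ultimately show ?thesis
    using continuous_map_compose[of TX "prod_topology T T" "\<lambda>x. (f x, g x)" T "\<lambda>(x, y). x \<otimes>\<^bsub>G\<^esub> y"]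
    by (simp add: o_def)
qed

definition setmul :: "('a, 'm) monoid_scheme \<Rightarrow> 'a set \<Rightarrow> 'a set \<Rightarrow> 'a set" where
  "setmul G A B = (\<lambda>(a, b). a \<otimes>\<^bsub>G\<^esub> b) ` (A \<times> B)"

lemma setmul_iff: "z \<in> setmul G A B \<longleftrightarrow> (\<exists>a\<in>A. \<exists>b\<in>B. z = a \<otimes>\<^bsub>G\<^esub> b)"
  unfolding setmul_def by auto

lemma compactin_setmul:
  assumes "topological_group G T" "compactin T A" "compactin T B"
  shows "compactin T (setmul G A B)"
proof -
  have "compactin (prod_topology T T) (A \<times> B)"
    using assms by (simp add: compactin_Times)
  moreover have "continuous_map (prod_topology T T) T (\<lambda>(x, y). x \<otimes>\<^bsub>G\<^esub> y)"
    using assms(1) by (simp add: topological_group_def)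
  ultimately show ?thesis unfolding setmul_def by (rule image_compactin)
qed

lemma (in group) grp_aux [simp]:
  "x \<in> carrier G \<Longrightarrow> y \<in> carrier G \<Longrightarrow> x \<otimes> (inv x \<otimes> y) = y"
  "x \<in> carrier G \<Longrightarrow> y \<in> carrier G \<Longrightarrow> inv x \<otimes> (x \<otimes> y) = y"
  by (simp_all add: m_assoc[symmetric])

lemma tg_const_cont: "a \<in> topspace T \<Longrightarrow> continuous_map TX T (\<lambda>x. a)"
  by simp

lemma open_subgroup_avoiding:
  fixes G :: "'a monoid" (structure)
  assumes pg: "profinite_group G T" and S: "subgroup S G" and cS: "compactin T S"
    and fK: "finite K" and K: "K \<subseteq> carrier G" and KS: "K \<inter> S = {}"
  shows "\<exists>V. subgroup V G \<and> openin T V \<and> S \<subseteq> V \<and> V \<inter> K = {}"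
proof -
  have tg: "topological_group G T" and cpt: "compact_space T" and hs: "Hausdorff_space T"
    and td: "totally_disconnected_space T"
    using pg by (auto simp: profinite_group_def)
  interpret group G using tg by (simp add: topological_group_def)
  have top: "topspace T = carrier G" using tg by (simp add: topological_group_def)
  have invc: "continuous_map T T (\<lambda>x. inv x)" using tg by (simp add: topological_group_def)
  have Ssub: "S \<subseteq> carrier G" using S subgroup.subset by blast
  define F where "F = (\<Union>k\<in>K. setmul G (setmul G S {k}) S)"
  have cF: "compactin T F" unfolding F_def
    using fK K top by (intro compactin_Union) (auto intro!: compactin_setmul[OF tg] cS)
  have oneF: "\<one> \<notin> F"
  proof
    assume "\<one> \<in> F"
    then obtain k a b where k: "k \<in> K" and a: "a \<in> S" and b: "b \<in> S" and e: "\<one> = a \<otimes> k \<otimes> b"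
      by (auto simp: F_def setmul_iff)
    have kc: "k \<in> carrier G" using k K by auto
    have ac: "a \<in> carrier G" and bc: "b \<in> carrier G" using a b Ssub by auto
    have "k = inv a \<otimes> inv b"
    proof -
      have "inv a \<otimes> inv b = inv a \<otimes> (a \<otimes> k \<otimes> b) \<otimes> inv b" using e ac bc kc by simp
      also have "\<dots> = k" using ac bc kc by (simp add: m_assoc)
      finally show ?thesis by simp
    qed
    then have "k \<in> S" using a b S by (simp add: subgroup.m_closed subgroup.m_inv_closed)
    then show False using k KS by auto
  qed
  obtain C where oC: "openin T C" and clC: "closedin T C" and oneC: "\<one> \<in> C" and CF: "C \<inter> F = {}"
    using clopen_sep[OF cpt hs td _ cF oneF] top by auto
  have Csub: "C \<subseteq> carrier G" using oC top openin_subset by blast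
  define D where "D = setmul G (setmul G S C) S"
  have Dsub: "D \<subseteq> carrier G" using Ssub Csub by (fastforce simp: D_def setmul_iff)
  have Diff: "x \<in> D \<longleftrightarrow> (\<exists>a\<in>S. \<exists>c\<in>C. \<exists>b\<in>S. x = a \<otimes> c \<otimes> b)" for x
    unfolding D_def setmul_def by force
  have clD: "closedin T D" unfolding D_def
    using compactin_setmul[OF tg compactin_setmul[OF tg cS closedin_compact_space[OF cpt clC]] cS]
    by (rule compactin_imp_closedin[OF hs])
  have oD: "openin T D"
  proof -
    have eq: "D = (\<Union>a\<in>S. \<Union>b\<in>S. {x \<in> topspace T. inv a \<otimes> x \<otimes> inv b \<in> C})"
    proof (rule Set.set_eqI, rule iffI)
      fix x assume "x \<in> D"
      then obtain a c b where a: "a \<in> S" and c: "c \<in> C" and b: "b \<in> S" and x: "x = a \<otimes> c \<otimes> b"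
        using Diff by auto
      have ac: "a \<in> carrier G" and bc: "b \<in> carrier G" and cc: "c \<in> carrier G"
        using a b c Ssub Csub by auto
      have "inv a \<otimes> x \<otimes> inv b = c" using ac bc cc x by (simp add: m_assoc)
      moreover have "x \<in> topspace T" using x ac bc cc top by simp
      ultimately show "x \<in> (\<Union>a\<in>S. \<Union>b\<in>S. {x \<in> topspace T. inv a \<otimes> x \<otimes> inv b \<in> C})"
        using a b c by blast
    next
      fix x assume "x \<in> (\<Union>a\<in>S. \<Union>b\<in>S. {x \<in> topspace T. inv a \<otimes> x \<otimes> inv b \<in> C})"
      then obtain a b where a: "a \<in> S" and b: "b \<in> S" and xc: "x \<in> carrier G"
          and c: "inv a \<otimes> x \<otimes> inv b \<in> C" using top by auto
      have ac: "a \<in> carrier G" and bc: "b \<in> carrier G" using a b Ssub by auto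
      have "x = a \<otimes> (inv a \<otimes> x \<otimes> inv b) \<otimes> b" using ac bc xc by (simp add: m_assoc)
      then show "x \<in> D" using Diff a b c by blast
    qed
    have op: "openin T {x \<in> topspace T. inv a \<otimes> x \<otimes> inv b \<in> C}" if a: "a \<in> S" and b: "b \<in> S" for a b
    proof -
      have ac: "a \<in> carrier G" and bc: "b \<in> carrier G" using a b Ssub by auto
      have "continuous_map T T (\<lambda>x. inv a \<otimes> x \<otimes> inv b)"
        using ac bc top by (intro tg_mult_cont[OF tg] tg_const_cont) auto
      then show ?thesis
        using oC openin_continuous_map_preimage by blast
    qed
    show ?thesis unfolding eq using op by (intro openin_Union) auto
  qed
  define V where "V = {g \<in> carrier G. \<forall>x\<in>carrier G. x \<in> D \<longleftrightarrow> g \<otimes> x \<in> D}"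
  define P where "P = {p \<in> topspace (prod_topology T T). (snd p \<in> D \<and> fst p \<otimes> snd p \<in> topspace T - D)
                          \<or> (snd p \<in> topspace T - D \<and> fst p \<otimes> snd p \<in> D)}"
  have mc: "continuous_map (prod_topology T T) T (\<lambda>p. fst p \<otimes> snd p)"
  proof -
    have "(\<lambda>p. fst p \<otimes> snd p) = (\<lambda>(x, y). x \<otimes> y)" by auto
    then show ?thesis using tg by (simp add: topological_group_def)
  qed
  have clP: "closedin (prod_topology T T) P"
  proof -
    have c1: "closedin (prod_topology T T) {p \<in> topspace (prod_topology T T). snd p \<in> A}"
      if "closedin T A" for A
      using closedin_continuous_map_preimage[OF continuous_map_snd that] by simp
    have c2: "closedin (prod_topology T T) {p \<in> topspace (prod_topology T T). fst p \<otimes> snd p \<in> A}"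
      if "closedin T A" for A
      using closedin_continuous_map_preimage[OF mc that] by simp
    have cD': "closedin T (topspace T - D)" using oD by auto
    have eqP: "P = ({p \<in> topspace (prod_topology T T). snd p \<in> D} \<inter> {p \<in> topspace (prod_topology T T). fst p \<otimes> snd p \<in> topspace T - D})
          \<union> ({p \<in> topspace (prod_topology T T). snd p \<in> topspace T - D} \<inter> {p \<in> topspace (prod_topology T T). fst p \<otimes> snd p \<in> D})"
      unfolding P_def by auto
    show ?thesis unfolding eqP by (intro closedin_Un closedin_Int c1 c2 clD cD')
  qed
  have cP: "compactin (prod_topology T T) P"
    using closedin_compact_space[OF _ clP] cpt by (simp add: compact_space_prod_topology)
  have cfP: "closedin T (fst ` P)"
    by (rule compactin_imp_closedin[OF hs image_compactin[OF cP continuous_map_fst]])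
  have Veq: "V = topspace T - fst ` P"
  proof (rule Set.set_eqI, rule iffI)
    fix g assume g: "g \<in> V"
    then have gc: "g \<in> carrier G" by (simp add: V_def)
    have "g \<notin> fst ` P"
    proof
      assume "g \<in> fst ` P"
      then obtain x where "(g, x) \<in> P" by force
      then show False using g unfolding P_def V_def by (auto simp: top)
    qed
    then show "g \<in> topspace T - fst ` P" using gc top by simp
  next
    fix g assume g: "g \<in> topspace T - fst ` P"
    have "\<forall>x\<in>carrier G. x \<in> D \<longleftrightarrow> g \<otimes> x \<in> D"
    proof (intro ballI)
      fix x assume x: "x \<in> carrier G"
      have "(g, x) \<notin> P" using g by force
      then show "x \<in> D \<longleftrightarrow> g \<otimes> x \<in> D" using g x unfolding P_def by (auto simp: top)
    qed
    then show "g \<in> V" using g top by (simp add: V_def)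
  qed
  have oV: "openin T V" unfolding Veq using cfP by auto
  have sV: "subgroup V G"
  proof (rule subgroupI)
    show "V \<subseteq> carrier G" by (auto simp: V_def)
    show "V \<noteq> {}" unfolding V_def by auto
    show "inv g \<in> V" if g: "g \<in> V" for g
    proof -
      have gc: "g \<in> carrier G" using g by (simp add: V_def)
      have "x \<in> D \<longleftrightarrow> inv g \<otimes> x \<in> D" if x: "x \<in> carrier G" for x
      proof -
        have "inv g \<otimes> x \<in> D \<longleftrightarrow> g \<otimes> (inv g \<otimes> x) \<in> D" using g x gc by (simp add: V_def)
        also have "g \<otimes> (inv g \<otimes> x) = x" using gc x by (simp add: m_assoc)
        finally show ?thesis by simp
      qed
      then show ?thesis using gc by (simp add: V_def)
    qed
    show "g \<otimes> h \<in> V" if g: "g \<in> V" and h: "h \<in> V" for g h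
    proof -
      have gc: "g \<in> carrier G" and hc: "h \<in> carrier G" using g h by (auto simp: V_def)
      have "x \<in> D \<longleftrightarrow> g \<otimes> h \<otimes> x \<in> D" if x: "x \<in> carrier G" for x
      proof -
        have "x \<in> D \<longleftrightarrow> h \<otimes> x \<in> D" using h x by (simp add: V_def)
        also have "\<dots> \<longleftrightarrow> g \<otimes> (h \<otimes> x) \<in> D" using g x hc by (simp add: V_def)
        also have "g \<otimes> (h \<otimes> x) = g \<otimes> h \<otimes> x" using gc hc x by (simp add: m_assoc)
        finally show ?thesis .
      qed
      then show ?thesis using gc hc by (simp add: V_def)
    qed
  qed
  have SV: "S \<subseteq> V"
  proof
    fix s assume s: "s \<in> S"
    have sc: "s \<in> carrier G" using s Ssub by auto
    have "x \<in> D \<longleftrightarrow> s \<otimes> x \<in> D" if x: "x \<in> carrier G" for x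
    proof
      assume "x \<in> D"
      then obtain a c b where a: "a \<in> S" and c: "c \<in> C" and b: "b \<in> S" and xe: "x = a \<otimes> c \<otimes> b"
        using Diff by auto
      have ac: "a \<in> carrier G" and bc: "b \<in> carrier G" and cc: "c \<in> carrier G"
        using a b c Ssub Csub by auto
      have "s \<otimes> x = (s \<otimes> a) \<otimes> c \<otimes> b" using xe sc ac bc cc by (simp add: m_assoc)
      moreover have "s \<otimes> a \<in> S" using s a S by (simp add: subgroup.m_closed)
      ultimately show "s \<otimes> x \<in> D" using Diff c b by blast
    next
      assume "s \<otimes> x \<in> D"
      then obtain a c b where a: "a \<in> S" and c: "c \<in> C" and b: "b \<in> S" and xe: "s \<otimes> x = a \<otimes> c \<otimes> b"
        using Diff by auto
      have ac: "a \<in> carrier G" and bc: "b \<in> carrier G" and cc: "c \<in> carrier G"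
        using a b c Ssub Csub by auto
      have "x = inv s \<otimes> (s \<otimes> x)" using sc x by (simp add: m_assoc)
      also have "\<dots> = (inv s \<otimes> a) \<otimes> c \<otimes> b" using xe sc ac bc cc by (simp add: m_assoc)
      finally have "x = (inv s \<otimes> a) \<otimes> c \<otimes> b" .
      moreover have "inv s \<otimes> a \<in> S" using s a S by (simp add: subgroup.m_closed subgroup.m_inv_closed)
      ultimately show "x \<in> D" using Diff c b by blast
    qed
    then show "s \<in> V" using sc by (simp add: V_def)
  qed
  have VK: "V \<inter> K = {}"
  proof (rule ccontr)
    assume "V \<inter> K \<noteq> {}"
    then obtain g where gV: "g \<in> V" and gK: "g \<in> K" by auto
    have gc: "g \<in> carrier G" using gK K by auto
    have oneS: "\<one> \<in> S" using S by (simp add: subgroup.one_closed)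
    have "\<one> \<in> D" using Diff oneS oneC by fastforce
    then have "g \<otimes> \<one> \<in> D" using gV by (simp add: V_def)
    then have "g \<in> D" using gc by simp
    then obtain a c b where a: "a \<in> S" and c: "c \<in> C" and b: "b \<in> S" and xe: "g = a \<otimes> c \<otimes> b"
      using Diff by auto
    have ac: "a \<in> carrier G" and bc: "b \<in> carrier G" and cc: "c \<in> carrier G"
      using a b c Ssub Csub by auto
    have "c = inv a \<otimes> g \<otimes> inv b" using xe ac bc cc by (simp add: m_assoc)
    moreover have "inv a \<in> S" "inv b \<in> S" using a b S by (auto simp: subgroup.m_inv_closed)
    ultimately have "c \<in> setmul G (setmul G S {g}) S" unfolding setmul_def by force
    then have "c \<in> F" unfolding F_def using gK by blast
    then show False using c CF by auto
  qed
  show ?thesis using sV oV SV VK by blast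
qed



theorem lemma4p3:
  fixes G0 :: "'a monoid" and T0 :: "'a topology"
    and G1 :: "'b monoid" and T1 :: "'b topology"
    and \<delta> :: "'a \<Rightarrow> 'b" and H :: "'b set" and \<rho> :: "'b \<Rightarrow> 'a"
  assumes "profinite_group G0 T0" and "profinite_group G1 T1"
    and "\<delta> \<in> hom G0 G1" and "continuous_map T0 T1 \<delta>" and "open_map T0 T1 \<delta>"
    and "finite (kernel G0 G1 \<delta>)"
    and "subgroup H G1" and "closedin T1 H"
    and "\<rho> \<in> hom (G1\<lparr>carrier := H\<rparr>) G0" and "continuous_map (subtopology T1 H) T0 \<rho>"
    and "\<forall>x\<in>H. \<delta> (\<rho> x) = x"
  shows "\<exists>U \<rho>'. subgroup U G1 \<and> openin T1 U \<and> H \<subseteq> U \<and>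
           \<rho>' \<in> hom (G1\<lparr>carrier := U\<rparr>) G0 \<and> continuous_map (subtopology T1 U) T0 \<rho>' \<and>
           (\<forall>x\<in>H. \<rho>' x = \<rho> x) \<and> (\<forall>x\<in>U. \<delta> (\<rho>' x) = x)"
proof -
  note pg0 = assms(1) and pg1 = assms(2) and dh = assms(3) and om = assms(5)
    and fK = assms(6) and sH = assms(7) and clH = assms(8) and rh = assms(9)
    and rc = assms(10) and sec = assms(11)
  have g0: "group G0" and top0: "topspace T0 = carrier G0"
    using pg0 by (auto simp: profinite_group_def topological_group_def)
  have g1: "group G1" and top1: "topspace T1 = carrier G1" and cpt1: "compact_space T1"
    using pg1 by (auto simp: profinite_group_def topological_group_def)
  interpret G0: group G0 by (rule g0)
  interpret G1: group G1 by (rule g1)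
  interpret d: group_hom G0 G1 \<delta>
    using g0 g1 dh by (simp add: group_hom_def group_hom_axioms_def)
  have gH: "group (G1\<lparr>carrier := H\<rparr>)" using sH g1 by (simp add: subgroup.subgroup_is_group)
  interpret r: group_hom "G1\<lparr>carrier := H\<rparr>" G0 \<rho>
    using gH g0 rh by (simp add: group_hom_def group_hom_axioms_def)
  define S where "S = \<rho> ` H"
  have sS: "subgroup S G0" using r.img_is_subgroup by (simp add: S_def)
  have "compactin T1 H" using closedin_compact_space[OF cpt1 clH] .
  then have "compactin (subtopology T1 H) H" by (simp add: compactin_subtopology)
  then have cS: "compactin T0 S" unfolding S_def using image_compactin rc by blast
  define K where "K = kernel G0 G1 \<delta> - {\<one>\<^bsub>G0\<^esub>}"
  have fK': "finite K" using fK by (simp add: K_def)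
  have Ksub: "K \<subseteq> carrier G0" by (auto simp: K_def kernel_def)
  have r1: "\<rho> \<one>\<^bsub>G1\<^esub> = \<one>\<^bsub>G0\<^esub>" using r.hom_one by simp
  have KS: "K \<inter> S = {}"
  proof (rule ccontr)
    assume "K \<inter> S \<noteq> {}"
    then obtain x where x: "x \<in> H" and k: "\<rho> x \<in> K" by (auto simp: S_def)
    then have "\<delta> (\<rho> x) = \<one>\<^bsub>G1\<^esub>" by (auto simp: K_def kernel_def)
    then have "x = \<one>\<^bsub>G1\<^esub>" using sec x by auto
    then show False using k r1 by (simp add: K_def)
  qed
  obtain V where sV: "subgroup V G0" and oV: "openin T0 V" and SV: "S \<subseteq> V" and VK: "V \<inter> K = {}"
    using open_subgroup_avoiding[OF pg0 sS cS fK' Ksub KS] by blast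
  have Vsub: "V \<subseteq> carrier G0" using sV subgroup.subset by blast
  have inj: "inj_on \<delta> V"
  proof (rule inj_onI)
    fix a b assume a: "a \<in> V" and b: "b \<in> V" and e: "\<delta> a = \<delta> b"
    have ac: "a \<in> carrier G0" and bc: "b \<in> carrier G0" using a b Vsub by auto
    have abV: "a \<otimes>\<^bsub>G0\<^esub> inv\<^bsub>G0\<^esub> b \<in> V" using a b sV by (simp add: subgroup.m_closed subgroup.m_inv_closed)
    have "\<delta> (a \<otimes>\<^bsub>G0\<^esub> inv\<^bsub>G0\<^esub> b) = \<one>\<^bsub>G1\<^esub>" using ac bc e by simp
    then have "a \<otimes>\<^bsub>G0\<^esub> inv\<^bsub>G0\<^esub> b \<in> kernel G0 G1 \<delta>" using ac bc by (simp add: kernel_def)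
    then have e1: "a \<otimes>\<^bsub>G0\<^esub> inv\<^bsub>G0\<^esub> b = \<one>\<^bsub>G0\<^esub>" using abV VK by (auto simp: K_def)
    have "a = a \<otimes>\<^bsub>G0\<^esub> inv\<^bsub>G0\<^esub> b \<otimes>\<^bsub>G0\<^esub> b" using ac bc by (simp add: G0.m_assoc)
    then show "a = b" using e1 bc by simp
  qed
  define U where "U = \<delta> ` V"
  have sU: "subgroup U G1" unfolding U_def using d.subgroup_img_is_subgroup[OF sV] .
  have oU: "openin T1 U" unfolding U_def using om oV by (simp add: open_map_def)
  have HU: "H \<subseteq> U"
  proof
    fix x assume x: "x \<in> H"
    then have "\<rho> x \<in> V" using SV by (auto simp: S_def)
    then show "x \<in> U" unfolding U_def using sec x by force
  qed
  define \<rho>' where "\<rho>' = inv_into V \<delta>"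
  have r'V: "\<rho>' y \<in> V" and dr': "\<delta> (\<rho>' y) = y" if "y \<in> U" for y
    using that unfolding \<rho>'_def U_def by (auto intro: inv_into_into f_inv_into_f)
  have r'eq: "\<rho>' y = v" if "v \<in> V" "\<delta> v = y" for y v
    unfolding \<rho>'_def using inv_into_f_eq[OF inj that] .
  have Usub: "U \<subseteq> carrier G1" using sU subgroup.subset by blast
  have hom': "\<rho>' \<in> hom (G1\<lparr>carrier := U\<rparr>) G0"
  proof (rule homI)
    fix x assume "x \<in> carrier (G1\<lparr>carrier := U\<rparr>)"
    then show "\<rho>' x \<in> carrier G0" using r'V Vsub by auto
  next
    fix x y assume "x \<in> carrier (G1\<lparr>carrier := U\<rparr>)" "y \<in> carrier (G1\<lparr>carrier := U\<rparr>)"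
    then have x: "x \<in> U" and y: "y \<in> U" by auto
    have m: "\<rho>' x \<otimes>\<^bsub>G0\<^esub> \<rho>' y \<in> V" using r'V[OF x] r'V[OF y] sV by (simp add: subgroup.m_closed)
    have "\<delta> (\<rho>' x \<otimes>\<^bsub>G0\<^esub> \<rho>' y) = \<delta> (\<rho>' x) \<otimes>\<^bsub>G1\<^esub> \<delta> (\<rho>' y)"
      using r'V[OF x] r'V[OF y] Vsub by (intro d.hom_mult) auto
    also have "\<dots> = x \<otimes>\<^bsub>G1\<^esub> y" using dr'[OF x] dr'[OF y] by simp
    finally have e: "\<delta> (\<rho>' x \<otimes>\<^bsub>G0\<^esub> \<rho>' y) = x \<otimes>\<^bsub>G1\<^esub> y" .
    show "\<rho>' (x \<otimes>\<^bsub>G1\<lparr>carrier := U\<rparr>\<^esub> y) = \<rho>' x \<otimes>\<^bsub>G0\<^esub> \<rho>' y"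
      using r'eq[OF m e] by simp
  qed
  have cont': "continuous_map (subtopology T1 U) T0 \<rho>'"
    unfolding continuous_map
  proof (intro conjI allI impI)
    have tU: "topspace (subtopology T1 U) = U" using Usub top1 by auto
    show "\<rho>' ` topspace (subtopology T1 U) \<subseteq> topspace T0"
      using tU r'V Vsub top0 by auto
    fix W assume oO: "openin T0 W"
    have eq: "{x \<in> topspace (subtopology T1 U). \<rho>' x \<in> W} = \<delta> ` (V \<inter> W)"
    proof (rule Set.set_eqI, rule iffI)
      fix y assume "y \<in> {x \<in> topspace (subtopology T1 U). \<rho>' x \<in> W}"
      then have y: "y \<in> U" and o: "\<rho>' y \<in> W" using tU by auto
      show "y \<in> \<delta> ` (V \<inter> W)" using r'V[OF y] dr'[OF y] o by (metis IntI imageI)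
    next
      fix y assume "y \<in> \<delta> ` (V \<inter> W)"
      then obtain v where v: "v \<in> V" "v \<in> W" and yv: "y = \<delta> v" by auto
      then have "y \<in> U" by (simp add: U_def)
      moreover have "\<rho>' y = v" using r'eq[OF v(1) yv[symmetric]] .
      ultimately show "y \<in> {x \<in> topspace (subtopology T1 U). \<rho>' x \<in> W}" using tU v by simp
    qed
    have o1: "openin T1 (\<delta> ` (V \<inter> W))" using om oV oO by (simp add: open_map_def openin_Int)
    have "\<delta> ` (V \<inter> W) = \<delta> ` (V \<inter> W) \<inter> U" by (auto simp: U_def)
    then show "openin (subtopology T1 U) {x \<in> topspace (subtopology T1 U). \<rho>' x \<in> W}"
      unfolding eq openin_subtopology using o1 by blast
  qed
  have onH: "\<forall>x\<in>H. \<rho>' x = \<rho> x"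
  proof
    fix x assume x: "x \<in> H"
    then have rV: "\<rho> x \<in> V" using SV by (auto simp: S_def)
    show "\<rho>' x = \<rho> x" using r'eq[OF rV] sec x by simp
  qed
  show ?thesis
    apply (rule exI[of _ U], rule exI[of _ \<rho>'])
    using sU oU HU hom' cont' onH dr' by simp
qed

end
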